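(* Let $G$ be a $4$-graph, let $A,B\subseteq V(G)$ be disjoint, and suppose $G$ is $\varepsilon$-close to $G^{\mathrm{odd}}(A,B)$ via some $\mathcal T\subseteq\binom{A\cup B}3$, where $\varepsilon\le0.1$. If $x_1x_2\cdots x_{\ell+3}$ is a tight walk in $G^{\mathrm{odd}}(A,B)$ with $\ell\ge6$ such that $\{x_1,x_2,x_3\}\in\mathcal T$ and $\{x_{\ell+1},x_{\ell+2},x_{\ell+3}\}\in\mathcal T$, then there are vertices $y_4,\dots,y_\ell\in V(G)$ such that $x_1x_2x_3y_4\cdots y_\ell x_{\ell+1}x_{\ell+2}x_{\ell+3}$ is a tight walk in $G$.
   Context: A $4$-graph is a $4$-uniform hypergraph. $G^{\mathrm{odd}}(A,B)$ is the $4$-graph on $A\cup B$ whose edges are the $4$-subsets meeting $A$ in an odd number of vertices. A tight walk in a $4$-graph $H$ is a sequence of (not necessarily distinct) vertices $v_1v_2\cdots v_m$, $m\ge4$, such that every four consecutive vertices $v_{i+1},v_{i+2},v_{i+3},v_{i+4}$ form an edge of $H$ (so they are distinct). For a triple $\{x,y,z\}\subseteq A\cup B$, its neighborhood in $G^{\mathrm{odd}}(A,B)$ is $B$ if an odd number of $x,y,z$ lie in $A$ and $A$ otherwise. $\partial\mathcal T$ is the set of pairs contained in some triple of $\mathcal T$. $G$ is $\varepsilon$-close to $G^{\mathrm{odd}}(A,B)$ via $\mathcal T\subseteq\binom{A\cup B}3$ if: (1) for each $\{x,y,z\}\in\mathcal T$ with neighborhood $U\in\{A,B\}$ in $G^{\mathrm{odd}}(A,B)$,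 the number of $u\in U$ with $\{x,y,z,u\}\in E(G)$ is at least $(1-\varepsilon)|U|$; (2) for each $\{x,y\}\in\partial\mathcal T$, the number of $z\in A$ with $\{x,y,z\}\in\mathcal T$ is at least $(1-\varepsilon)|A|$, and the number of $z\in B$ with $\{x,y,z\}\in\mathcal T$ is at least $(1-\varepsilon)|B|$; (3) for each $x\in A\cup B$, the number of $y\in A$ with $\{x,y\}\in\partial\mathcal T$ is at least $(1-\varepsilon)|A|$, and the number of $y\in B$ with $\{x,y\}\in\partial\mathcal T$ is at least $(1-\varepsilon)|B|$. *)

theory Defs
  imports Complex_Main
begin

definition four_graph :: "'a set \<Rightarrow> 'a set set \<Rightarrow> bool" where
  "four_graph V E \<longleftrightarrow> (\<forall>e\<in>E. e \<subseteq> V \<and> card e = 4)"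

definition Godd :: "'a set \<Rightarrow> 'a set \<Rightarrow> 'a set set" where
  "Godd A B = {e. e \<subseteq> A \<union> B \<and> card e = 4 \<and> odd (card (e \<inter> A))}"

definition tight_walk :: "'a set set \<Rightarrow> 'a list \<Rightarrow> bool" where
  "tight_walk E w \<longleftrightarrow> 4 \<le> length w \<and>
     (\<forall>i. i + 4 \<le> length w \<longrightarrow>
        distinct [w!i, w!(i+1), w!(i+2), w!(i+3)] \<and>
        {w!i, w!(i+1), w!(i+2), w!(i+3)} \<in> E)"

definition odd_nbhd :: "'a set \<Rightarrow> 'a set \<Rightarrow> 'a set \<Rightarrow> 'a set" where
  "odd_nbhd A B t = (if odd (card (t \<inter> A)) then B else A)"

definition shadow :: "'a set set \<Rightarrow> 'a set set" where
  "shadow T = {p. card p = 2 \<and> (\<exists>t\<in>T. p \<subseteq> t)}"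

definition eps_close :: "'a set set \<Rightarrow> 'a set \<Rightarrow> 'a set \<Rightarrow> real \<Rightarrow> 'a set set \<Rightarrow> bool" where
  "eps_close E A B eps T \<longleftrightarrow>
     (\<forall>t\<in>T. t \<subseteq> A \<union> B \<and> card t = 3) \<and>
     (\<forall>t\<in>T. real (card {u \<in> odd_nbhd A B t. insert u t \<in> E})
              \<ge> (1 - eps) * real (card (odd_nbhd A B t))) \<and>
     (\<forall>p\<in>shadow T.
        real (card {z\<in>A. p \<union> {z} \<in> T}) \<ge> (1 - eps) * real (card A) \<and>
        real (card {z\<in>B. p \<union> {z} \<in> T}) \<ge> (1 - eps) * real (card B)) \<and>
     (\<forall>x\<in>A \<union> B.
        real (card {y\<in>A. {x, y} \<in> shadow T}) \<ge> (1 - eps) * real (card A) \<and>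
        real (card {y\<in>B. {x, y} \<in> shadow T}) \<ge> (1 - eps) * real (card B))"

end

theory Submission imports Defs begin

definition cls :: "'a set \<Rightarrow> 'a set \<Rightarrow> 'a \<Rightarrow> 'a set" where
  "cls A B v = (if v \<in> A then A else B)"

lemma card3_distinct: "card {a,b,c} = 3 \<Longrightarrow> distinct [a,b,c]"
  by (auto simp: card_insert_if split: if_splits)

lemma card4_distinct: "card {a,b,c,d} = 4 \<Longrightarrow> distinct [a,b,c,d]"
  by (auto simp: card_insert_if split: if_splits)

lemma card3_int: "distinct [p,q,r] \<Longrightarrow>
  card ({p,q,r} \<inter> A) = of_bool (p\<in>A) + of_bool (q\<in>A) + of_bool (r\<in>A)"
  by (auto simp: card_insert_if Int_insert_left)

lemma card4_int: "distinct [p,q,r,s] \<Longrightarrow>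
  card ({p,q,r,s} \<inter> A) = of_bool (p\<in>A) + of_bool (q\<in>A) + of_bool (r\<in>A) + of_bool (s\<in>A)"
  by (auto simp: card_insert_if Int_insert_left)

lemma nbhd_lemma:
  assumes "{p,q,r,s} \<in> Godd A B" "distinct [p,q,r,s]" "card {p',q',r'} = 3"
    "p'\<in>A \<longleftrightarrow> p\<in>A" "q'\<in>A \<longleftrightarrow> q\<in>A" "r'\<in>A \<longleftrightarrow> r\<in>A"
  shows "odd_nbhd A B {p',q',r'} = cls A B s"
proof -
  have o: "odd (card ({p,q,r,s} \<inter> A))" using assms(1) by (simp add: Godd_def)
  have d: "distinct [p',q',r']" by (rule card3_distinct[OF assms(3)])
  show ?thesis using o card4_int[OF assms(2), of A] card3_int[OF d, of A] assms(4-6)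
    by (auto simp: odd_nbhd_def cls_def)
qed

lemma pick4:
  fixes e :: real
  assumes "finite U" "U \<noteq> {}" "e \<le> 0.1"
    "(1-e) * card U \<le> card {u\<in>U. P1 u}"
    "(1-e) * card U \<le> card {u\<in>U. P2 u}"
    "(1-e) * card U \<le> card {u\<in>U. P3 u}"
    "(1-e) * card U \<le> card {u\<in>U. P4 u}"
  shows "\<exists>u\<in>U. P1 u \<and> P2 u \<and> P3 u \<and> P4 u"
proof (rule ccontr)
  assume n: "\<not> ?thesis"
  have c: "real (card {u\<in>U. \<not> P u}) \<le> e * card U" if h: "(1-e) * card U \<le> card {u\<in>U. P u}" for P
  proof -
    have eq: "{u\<in>U. P u} \<union> {u\<in>U. \<not> P u} = U" by auto
    have "card ({u\<in>U. P u} \<union> {u\<in>U. \<not> P u}) = card {u\<in>U. P u} + card {u\<in>U. \<not> P u}"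
      by (rule card_Un_disjoint) (use assms(1) in auto)
    hence "card U = card {u\<in>U. P u} + card {u\<in>U. \<not> P u}" by (simp only: eq)
    hence "real (card U) = card {u\<in>U. P u} + card {u\<in>U. \<not> P u}" by simp
    then show ?thesis using h by (simp add: algebra_simps)
  qed
  define X1 where "X1 = {u\<in>U. \<not> P1 u}"
  define X2 where "X2 = {u\<in>U. \<not> P2 u}"
  define X3 where "X3 = {u\<in>U. \<not> P3 u}"
  define X4 where "X4 = {u\<in>U. \<not> P4 u}"
  have "U \<subseteq> X1 \<union> X2 \<union> X3 \<union> X4"
    using n unfolding X1_def X2_def X3_def X4_def by blast
  hence "card U \<le> card (X1 \<union> X2 \<union> X3 \<union> X4)"
    using assms(1) unfolding X1_def X2_def X3_def X4_def by (intro card_mono) auto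
  also have "\<dots> \<le> card (X1 \<union> X2 \<union> X3) + card X4" by (rule card_Un_le)
  also have "\<dots> \<le> card (X1 \<union> X2) + card X3 + card X4" using card_Un_le[of "X1 \<union> X2" X3] by simp
  also have "\<dots> \<le> card X1 + card X2 + card X3 + card X4" using card_Un_le[of X1 X2] by simp
  finally have "real (card U) \<le> card X1 + card X2 + card X3 + card X4" by linarith
  also have "\<dots> \<le> 4 * e * card U"
    using c[OF assms(4)] c[OF assms(5)] c[OF assms(6)] c[OF assms(7)]
    unfolding X1_def X2_def X3_def X4_def by linarith
  finally have le: "real (card U) * 1 \<le> real (card U) * (4 * e)" by (simp add: mult.commute)
  have "card U > 0" using assms(1,2) by (simp add: card_gt_0_iff)
  hence "1 \<le> 4 * e" using le by (simp only: mult_le_cancel_left_pos of_nat_0_less_iff)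
  thus False using assms(3) by simp
qed
lemma cls_type: "u \<in> cls A B v \<Longrightarrow> A \<inter> B = {} \<Longrightarrow> (u \<in> A \<longleftrightarrow> v \<in> A) \<and> u \<in> A \<union> B"
  by (auto simp: cls_def split: if_splits)

lemma cls_self: "v \<in> A \<union> B \<Longrightarrow> v \<in> cls A B v"
  by (auto simp: cls_def)

lemma cls_AB: "cls A B v = A \<or> cls A B v = B" by (simp add: cls_def)

lemma shadowI: "t \<in> T \<Longrightarrow> a \<in> t \<Longrightarrow> b \<in> t \<Longrightarrow> a \<noteq> b \<Longrightarrow> {a,b} \<in> shadow T"
  unfolding shadow_def by auto

lemma close_parts:
  assumes "eps_close E A B eps T"
  shows "\<forall>t\<in>T. card t = 3"
   "\<forall>t\<in>T. (1 - eps) * real (card (odd_nbhd A B t)) \<le> real (card {u \<in> odd_nbhd A B t. insert u t \<in> E})"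
   "\<forall>p\<in>shadow T.
        (1 - eps) * real (card A) \<le> real (card {z\<in>A. p \<union> {z} \<in> T}) \<and>
        (1 - eps) * real (card B) \<le> real (card {z\<in>B. p \<union> {z} \<in> T})"
   "\<forall>x\<in>A \<union> B.
        (1 - eps) * real (card A) \<le> real (card {y\<in>A. {x, y} \<in> shadow T}) \<and>
        (1 - eps) * real (card B) \<le> real (card {y\<in>B. {x, y} \<in> shadow T})"
  using assms unfolding eps_close_def by auto

lemma close_T: "eps_close E A B eps T \<Longrightarrow> p \<in> shadow T \<Longrightarrow> U = cls A B v \<Longrightarrow>
   (1-eps) * card U \<le> card {z\<in>U. p \<union> {z} \<in> T}"
  using close_parts(3)[of E A B eps T] cls_AB[of A B v] by auto

lemma close_S: "eps_close E A B eps T \<Longrightarrow> x \<in> A \<union> B \<Longrightarrow> U = cls A B v \<Longrightarrow>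
   (1-eps) * card U \<le> card {y\<in>U. {x,y} \<in> shadow T}"
  using close_parts(4)[of E A B eps T] cls_AB[of A B v] by auto

lemma close_N: "eps_close E A B eps T \<Longrightarrow> t \<in> T \<Longrightarrow> odd_nbhd A B t = U \<Longrightarrow>
   (1-eps) * card U \<le> card {u\<in>U. insert u t \<in> E}"
  using close_parts(2)[of E A B eps T] by auto

lemma drop3: "length xs = l + 3 \<Longrightarrow> drop l xs = [xs!l, xs!(l+1), xs!(l+2)]"
  by (rule nth_equalityI) (auto simp: less_Suc_eq numeral_3_eq_3 numeral_2_eq_2)

lemma take3: "length xs = l + 3 \<Longrightarrow> take 3 xs = [xs!0, xs!1, xs!2]"
  by (rule nth_equalityI) (auto simp: less_Suc_eq numeral_3_eq_3 numeral_2_eq_2)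

theorem lemma6p5:
  fixes V :: "'a set" and E :: "'a set set" and A B :: "'a set"
    and eps :: real and T :: "'a set set" and xs :: "'a list" and l :: nat
  assumes "finite V"
    and "four_graph V E"
    and "A \<subseteq> V" and "B \<subseteq> V" and "A \<inter> B = {}"
    and "eps_close E A B eps T"
    and "eps \<le> 0.1"
    and "6 \<le> l"
    and "length xs = l + 3"
    and "tight_walk (Godd A B) xs"
    and "set (take 3 xs) \<in> T"
    and "set (drop l xs) \<in> T"
  shows "\<exists>ys. length ys = l - 3 \<and> set ys \<subseteq> V \<and>
           tight_walk E (take 3 xs @ ys @ drop l xs)"
proof -
  note cl = assms(6)
  obtain m where lm: "l = m + 6" using assms(8) by (metis add.commute le_iff_add)
  define x where "x = (\<lambda>i. xs ! i)"
  have tw: "distinct [x i, x (i+1), x (i+2), x (i+3)] \<and> {x i, x (i+1), x (i+2), x (i+3)} \<in> Godd A B"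
    if "i + 4 \<le> l + 3" for i
    using assms(9,10) that unfolding tight_walk_def x_def by auto
  have xAB: "x i \<in> A \<union> B" if "i < l + 3" for i
  proof -
    have "\<exists>j. j + 4 \<le> l + 3 \<and> (i = j \<or> i = j+1 \<or> i = j+2 \<or> i = j+3)"
    proof (cases "i + 4 \<le> l + 3")
      case True then show ?thesis by blast
    next
      case False then show ?thesis using that assms(8) by (intro exI[of _ "l - 1"]) auto
    qed
    then obtain j where j: "j + 4 \<le> l + 3" "i = j \<or> i = j+1 \<or> i = j+2 \<or> i = j+3" by blast
    have "{x j, x (j+1), x (j+2), x (j+3)} \<subseteq> A \<union> B" using tw[OF j(1)] by (simp add: Godd_def)
    then show ?thesis using j(2) by auto
  qed
  have finA: "finite A" and finB: "finite B" using assms(1,3,4) finite_subset by auto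
  have clsfin: "finite (cls A B v)" for v using finA finB by (simp add: cls_def)
  have clsne: "cls A B (x i) \<noteq> {}" if "i < l + 3" for i using cls_self[OF xAB[OF that]] by blast
  have Tc: "card t = 3" if "t \<in> T" for t using close_parts(1)[OF cl] that by blast
  have E4: "card e = 4" if "e \<in> E" for e using assms(2) that by (simp add: four_graph_def)
  have ghkT: "{x l, x (l+1), x (l+2)} \<in> T" using assms(12) drop3[OF assms(9)] by (simp add: x_def)
  have x012T: "{x 0, x 1, x 2} \<in> T" using assms(11) take3[OF assms(9)] by (simp add: x_def)
  have pick: "\<exists>u\<in>cls A B (x i). P1 u \<and> P2 u \<and> P3 u \<and> P4 u"
    if "i < l + 3"
    "(1-eps) * card (cls A B (x i)) \<le> card {u\<in>cls A B (x i). P1 u}"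
    "(1-eps) * card (cls A B (x i)) \<le> card {u\<in>cls A B (x i). P2 u}"
    "(1-eps) * card (cls A B (x i)) \<le> card {u\<in>cls A B (x i). P3 u}"
    "(1-eps) * card (cls A B (x i)) \<le> card {u\<in>cls A B (x i). P4 u}" for i P1 P2 P3 P4
    by (rule pick4[OF clsfin clsne[OF that(1)] assms(7) that(2-5)])
  have ctype: "(u \<in> A \<longleftrightarrow> v \<in> A) \<and> u \<in> A \<union> B" if "u \<in> cls A B v" for u v
    using cls_type[OF that assms(5)] .
  define Pf where "Pf n z \<longleftrightarrow> (\<forall>i<3. z i = x i) \<and> (\<forall>i<n. (z i \<in> A \<longleftrightarrow> x i \<in> A) \<and> z i \<in> A \<union> B)
     \<and> (\<forall>i. i + 3 \<le> n \<longrightarrow> {z i, z (i+1), z (i+2)} \<in> T)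
     \<and> (\<forall>i. i + 4 \<le> n \<longrightarrow> {z i, z (i+1), z (i+2), z (i+3)} \<in> E)" for n z
  have pre: "j \<le> m \<Longrightarrow> \<exists>z. Pf (j+3) z" for j
  proof (induction j)
    case 0
    have "Pf 3 x" unfolding Pf_def using x012T xAB lm
      by (auto simp: numeral_3_eq_3 numeral_2_eq_2 le_Suc_eq)
    then show ?case by auto
  next
    case (Suc j)
    then obtain z where z: "Pf (j+3) z" by auto
    have jl: "j + 4 \<le> l + 3" using Suc.prems lm by simp
    have tT: "{z j, z (j+1), z (j+2)} \<in> T" using z unfolding Pf_def by auto
    have ty: "(z i \<in> A \<longleftrightarrow> x i \<in> A)" if "i < j + 3" for i using z that unfolding Pf_def by auto
    have nb: "odd_nbhd A B {z j, z (j+1), z (j+2)} = cls A B (x (j+3))"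
      using tw[OF jl] Tc[OF tT] ty[of j] ty[of "j+1"] ty[of "j+2"]
      by (intro nbhd_lemma) auto
    have dd: "distinct [z j, z (j+1), z (j+2)]" by (rule card3_distinct[OF Tc[OF tT]])
    have sh: "{z (j+1), z (j+2)} \<in> shadow T" using dd by (intro shadowI[OF tT]) auto
    have c1: "(1-eps) * card (cls A B (x (j+3))) \<le> card {u\<in>cls A B (x (j+3)). insert u {z j, z (j+1), z (j+2)} \<in> E}"
      using close_N[OF cl tT nb] .
    have c2: "(1-eps) * card (cls A B (x (j+3))) \<le> card {u\<in>cls A B (x (j+3)). {z (j+1), z (j+2)} \<union> {u} \<in> T}"
      using close_T[OF cl sh refl] .
    have jl': "j + 3 < l + 3" using jl by simp
    from pick[OF jl' c1 c2 c2 c2]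
    obtain u where u: "u \<in> cls A B (x (j+3))" "insert u {z j, z (j+1), z (j+2)} \<in> E"
       "{z (j+1), z (j+2)} \<union> {u} \<in> T" by blast
    define z' where "z' = z(j+3 := u)"
    have TY: "(z' i \<in> A \<longleftrightarrow> x i \<in> A) \<and> z' i \<in> A \<union> B" if i: "i < Suc j + 3" for i
    proof (cases "i = j + 3")
      case True then show ?thesis using ctype[OF u(1)] by (auto simp: z'_def)
    next
      case False then have "i < j + 3" using i by simp
      then show ?thesis using z False unfolding Pf_def z'_def by auto
    qed
    have "Pf (Suc j + 3) z'"
      unfolding Pf_def
    proof (intro conjI allI impI)
      fix i :: nat assume "i < 3" then show "z' i = x i" using z unfolding Pf_def z'_def by auto
    next
      fix i :: nat assume i: "i < Suc j + 3"
      show "z' i \<in> A \<longleftrightarrow> x i \<in> A" using TY[OF i] by blast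
    next
      fix i :: nat assume i: "i < Suc j + 3"
      show "z' i \<in> A \<union> B" using TY[OF i] by blast
    next
      fix i :: nat assume i: "i + 3 \<le> Suc j + 3"
      show "{z' i, z' (i+1), z' (i+2)} \<in> T"
      proof (cases "i = j + 1")
        case True then show ?thesis using u(3) by (simp add: z'_def insert_commute)
      next
        case False then have "i + 3 \<le> j + 3" using i by simp
        then show ?thesis using z unfolding Pf_def z'_def by auto
      qed
    next
      fix i :: nat assume i: "i + 4 \<le> Suc j + 3"
      show "{z' i, z' (i+1), z' (i+2), z' (i+3)} \<in> E"
      proof (cases "i = j")
        case True then show ?thesis using u(2) by (simp add: z'_def insert_commute)
      next
        case False then have "i + 4 \<le> j + 3" using i by simp
        then show ?thesis using z unfolding Pf_def z'_def by auto
      qed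
    qed
    then show ?case by blast
  qed
  obtain z where z: "Pf (m+3) z" using pre[of m] by auto
  define a where "a = z m"
  define b where "b = z (m+1)"
  define c where "c = z (m+2)"
  define g where "g = x (m+6)"
  define h where "h = x (m+7)"
  define k where "k = x (m+8)"
  have abcT: "{a,b,c} \<in> T" using z unfolding Pf_def a_def b_def c_def by auto
  have ghkT': "{g,h,k} \<in> T" using ghkT lm by (simp add: g_def h_def k_def add.commute add.left_commute)
  have ty: "(z i \<in> A \<longleftrightarrow> x i \<in> A)" if "i < m + 3" for i using z that unfolding Pf_def by auto
  have tya: "a \<in> A \<longleftrightarrow> x m \<in> A" "b \<in> A \<longleftrightarrow> x (m+1) \<in> A" "c \<in> A \<longleftrightarrow> x (m+2) \<in> A"
    using ty[of m] ty[of "m+1"] ty[of "m+2"] by (auto simp: a_def b_def c_def)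
  have W: "distinct [x i, x (i+1), x (i+2), x (i+3)] \<and> {x i, x (i+1), x (i+2), x (i+3)} \<in> Godd A B"
    if "i \<le> m + 5" for i using tw[of i] that lm by simp
  have Wg: "distinct [x i, x j1, x j2, x j3] \<and> {x i, x j1, x j2, x j3} \<in> Godd A B"
    if "i \<le> m+5" "j1 = i+1" "j2 = i+2" "j3 = i+3" for i j1 j2 j3 using W[OF that(1)] that(2-4) by simp
  have W1: "distinct [x (m+1), x (m+2), x (m+3), x (m+4)] \<and> {x (m+1), x (m+2), x (m+3), x (m+4)} \<in> Godd A B"
    by (rule Wg) simp_all
  have W2: "distinct [x (m+2), x (m+3), x (m+4), x (m+5)] \<and> {x (m+2), x (m+3), x (m+4), x (m+5)} \<in> Godd A B"
    by (rule Wg) simp_all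
  have W3: "distinct [x (m+3), x (m+4), x (m+5), x (m+6)] \<and> {x (m+3), x (m+4), x (m+5), x (m+6)} \<in> Godd A B"
    by (rule Wg) simp_all
  have W4: "distinct [x (m+4), x (m+5), x (m+6), x (m+7)] \<and> {x (m+4), x (m+5), x (m+6), x (m+7)} \<in> Godd A B"
    by (rule Wg) simp_all
  have W5: "distinct [x (m+5), x (m+6), x (m+7), x (m+8)] \<and> {x (m+5), x (m+6), x (m+7), x (m+8)} \<in> Godd A B"
    by (rule Wg) simp_all
  have gAB: "g \<in> A \<union> B" using xAB[of "m+6"] lm by (simp add: g_def)
  have nb_abc: "odd_nbhd A B {a,b,c} = cls A B (x (m+3))"
    using W[of m] Tc[OF abcT] tya by (intro nbhd_lemma) auto
  have dabc: "distinct [a,b,c]" by (rule card3_distinct[OF Tc[OF abcT]])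
  have sh_bc: "{b,c} \<in> shadow T" using dabc by (intro shadowI[OF abcT]) auto
  have cd1: "(1-eps) * card (cls A B (x (m+3))) \<le> card {u\<in>cls A B (x (m+3)). insert u {a,b,c} \<in> E}"
    using close_N[OF cl abcT nb_abc] .
  have cd2: "(1-eps) * card (cls A B (x (m+3))) \<le> card {u\<in>cls A B (x (m+3)). {b,c} \<union> {u} \<in> T}"
    using close_T[OF cl sh_bc refl] .
  have cd3: "(1-eps) * card (cls A B (x (m+3))) \<le> card {u\<in>cls A B (x (m+3)). {g,u} \<in> shadow T}"
    using close_S[OF cl gAB refl] .
  have "m+3 < l+3" using lm by simp
  from pick[OF this cd1 cd2 cd3 cd3] obtain d where d: "d \<in> cls A B (x (m+3))" "insert d {a,b,c} \<in> E" "{b,c} \<union> {d} \<in> T" "{g,d} \<in> shadow T" by blast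
  have bcdT: "{b,c,d} \<in> T" using d(3) by (simp add: insert_commute)
  have dbcd: "distinct [b,c,d]" by (rule card3_distinct[OF Tc[OF bcdT]])
  have sh_cd: "{c,d} \<in> shadow T" using dbcd by (intro shadowI[OF bcdT]) auto
  have tyd: "d \<in> A \<longleftrightarrow> x (m+3) \<in> A" using ctype[OF d(1)] by simp
  have dghk: "distinct [g,h,k]" by (rule card3_distinct[OF Tc[OF ghkT']])
  have sh_gh: "{g,h} \<in> shadow T" using dghk by (intro shadowI[OF ghkT']) auto
  have W5: "distinct [x (m+6), x (m+7), x (m+8), x (m+5)] \<and> {x (m+6), x (m+7), x (m+8), x (m+5)} \<in> Godd A B"
  proof -
    have "{x (m+6), x (m+7), x (m+8), x (m+5)} = {x (m+5), x (m+6), x (m+7), x (m+8)}" by auto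
    then show ?thesis using W5 by auto
  qed
  have nb_ghk: "odd_nbhd A B {g,h,k} = cls A B (x (m+5))"
    using W5 Tc[OF ghkT'] unfolding g_def h_def k_def by (intro nbhd_lemma) auto
  have cf1: "(1-eps) * card (cls A B (x (m+5))) \<le> card {u\<in>cls A B (x (m+5)). insert u {g,h,k} \<in> E}"
    using close_N[OF cl ghkT' nb_ghk] .
  have cf2: "(1-eps) * card (cls A B (x (m+5))) \<le> card {u\<in>cls A B (x (m+5)). {g,h} \<union> {u} \<in> T}"
    using close_T[OF cl sh_gh refl] .
  have cf3: "(1-eps) * card (cls A B (x (m+5))) \<le> card {u\<in>cls A B (x (m+5)). {c,d} \<union> {u} \<in> T}"
    using close_T[OF cl sh_cd refl] .
  have cf4: "(1-eps) * card (cls A B (x (m+5))) \<le> card {u\<in>cls A B (x (m+5)). {g,d} \<union> {u} \<in> T}"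
    using close_T[OF cl d(4) refl] .
  have "m+5 < l+3" using lm by simp
  from pick[OF this cf1 cf2 cf3 cf4] obtain f where f: "f \<in> cls A B (x (m+5))" "insert f {g,h,k} \<in> E" "{g,h} \<union> {f} \<in> T"
     "{c,d} \<union> {f} \<in> T" "{g,d} \<union> {f} \<in> T" by blast
  have ghfT: "{g,h,f} \<in> T" and cdfT: "{c,d,f} \<in> T" and gdfT: "{g,d,f} \<in> T" using f by (auto simp: insert_commute)
  have tyf: "f \<in> A \<longleftrightarrow> x (m+5) \<in> A" using ctype[OF f(1)] by simp
  have nb_bcd: "odd_nbhd A B {b,c,d} = cls A B (x (m+4))"
    using W1 Tc[OF bcdT] tya tyd by (intro nbhd_lemma) auto
  have nb_cdf: "odd_nbhd A B {c,d,f} = cls A B (x (m+4))"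
  proof -
    have "{x (m+2), x (m+3), x (m+5), x (m+4)} = {x (m+2), x (m+3), x (m+4), x (m+5)}" by auto
    then have "distinct [x (m+2), x (m+3), x (m+5), x (m+4)] \<and> {x (m+2), x (m+3), x (m+5), x (m+4)} \<in> Godd A B"
      using W2 by auto
    then show ?thesis using Tc[OF cdfT] tya tyd tyf by (intro nbhd_lemma) auto
  qed
  have nb_gdf: "odd_nbhd A B {g,d,f} = cls A B (x (m+4))"
  proof -
    have "{x (m+6), x (m+3), x (m+5), x (m+4)} = {x (m+3), x (m+4), x (m+5), x (m+6)}" by auto
    then have "distinct [x (m+6), x (m+3), x (m+5), x (m+4)] \<and> {x (m+6), x (m+3), x (m+5), x (m+4)} \<in> Godd A B"
      using W3 by auto
    then show ?thesis using Tc[OF gdfT] tyd tyf unfolding g_def by (intro nbhd_lemma) auto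
  qed
  have nb_ghf: "odd_nbhd A B {g,h,f} = cls A B (x (m+4))"
  proof -
    have "{x (m+6), x (m+7), x (m+5), x (m+4)} = {x (m+4), x (m+5), x (m+6), x (m+7)}" by auto
    then have "distinct [x (m+6), x (m+7), x (m+5), x (m+4)] \<and> {x (m+6), x (m+7), x (m+5), x (m+4)} \<in> Godd A B"
      using W4 by auto
    then show ?thesis using Tc[OF ghfT] tyf unfolding g_def h_def by (intro nbhd_lemma) auto
  qed
  have ce1: "(1-eps) * card (cls A B (x (m+4))) \<le> card {u\<in>cls A B (x (m+4)). insert u {b,c,d} \<in> E}"
    using close_N[OF cl bcdT nb_bcd] .
  have ce2: "(1-eps) * card (cls A B (x (m+4))) \<le> card {u\<in>cls A B (x (m+4)). insert u {c,d,f} \<in> E}"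
    using close_N[OF cl cdfT nb_cdf] .
  have ce3: "(1-eps) * card (cls A B (x (m+4))) \<le> card {u\<in>cls A B (x (m+4)). insert u {g,d,f} \<in> E}"
    using close_N[OF cl gdfT nb_gdf] .
  have ce4: "(1-eps) * card (cls A B (x (m+4))) \<le> card {u\<in>cls A B (x (m+4)). insert u {g,h,f} \<in> E}"
    using close_N[OF cl ghfT nb_ghf] .
  have "m+4 < l+3" using lm by simp
  from pick[OF this ce1 ce2 ce3 ce4] obtain e where e: "e \<in> cls A B (x (m+4))" "insert e {b,c,d} \<in> E" "insert e {c,d,f} \<in> E"
     "insert e {g,d,f} \<in> E" "insert e {g,h,f} \<in> E" by blast
  define Z where "Z i = (if i < m + 3 then z i else if i = m + 3 then d else if i = m + 4 then e
      else if i = m + 5 then f else x i)" for i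
  have ZE: "{Z i, Z (i+1), Z (i+2), Z (i+3)} \<in> E" if "i + 4 \<le> m + 9" for i
  proof -
    have "i + 4 \<le> m + 3 \<or> i = m \<or> i = m+1 \<or> i = m+2 \<or> i = m+3 \<or> i = m+4 \<or> i = m+5" using that by linarith
    moreover have ?thesis if "i + 4 \<le> m + 3"
      using z that unfolding Pf_def Z_def by auto
    moreover have ?thesis if "i = m"
      using d(2) that unfolding Z_def a_def b_def c_def by (simp add: insert_commute add.commute)
    moreover have ?thesis if "i = m + 1"
      using e(2) that unfolding Z_def a_def b_def c_def by (simp add: insert_commute add.commute)
    moreover have ?thesis if "i = m + 2"
      using e(3) that unfolding Z_def a_def b_def c_def by (simp add: insert_commute add.commute)
    moreover have ?thesis if "i = m + 3"
      using e(4) that unfolding Z_def g_def by (simp add: insert_commute add.commute)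
    moreover have ?thesis if "i = m + 4"
      using e(5) that unfolding Z_def g_def h_def by (simp add: insert_commute add.commute)
    moreover have ?thesis if "i = m + 5"
      using f(2) that unfolding Z_def g_def h_def k_def by (simp add: insert_commute add.commute)
    ultimately show ?thesis by blast
  qed
  have ZAB: "Z i \<in> A \<union> B" if "i < m + 6" for i
    using z ctype[OF d(1)] ctype[OF e(1)] ctype[OF f(1)] that unfolding Pf_def Z_def by auto
  define ys where "ys = map Z [3..<m+6]"
  define L where "L = take 3 xs @ ys @ drop l xs"
  have Lx: "L = [x 0, x 1, x 2] @ map Z [3..<m+6] @ [x (m+6), x (m+7), x (m+8)]"
    unfolding L_def ys_def using take3[OF assms(9)] drop3[OF assms(9)] lm
    by (simp add: x_def add.commute add.left_commute)
  have lenL: "length L = m + 9" using Lx by simp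
  have LZ: "L ! i = Z i" if "i < m + 9" for i
  proof -
    have "i < 3 \<or> (3 \<le> i \<and> i < m + 6) \<or> i = m+6 \<or> i = m+7 \<or> i = m+8" using that by linarith
    moreover have ?thesis if i3: "i < 3"
    proof -
      have "z i = x i" using z i3 unfolding Pf_def by blast
      then have "Z i = x i" using i3 unfolding Z_def by simp
      moreover have "L ! i = x i" using i3 unfolding Lx
        by (auto simp: nth_append less_Suc_eq numeral_3_eq_3 numeral_2_eq_2)
      ultimately show ?thesis by simp
    qed
    moreover have ?thesis if "3 \<le> i" "i < m + 6"
    proof -
      have "L ! i = (map Z [3..<m+6] @ [x (m+6), x (m+7), x (m+8)]) ! (i - 3)"
        using that unfolding Lx by (subst nth_append_right) (simp_all add: numeral_3_eq_3)
      also have "\<dots> = map Z [3..<m+6] ! (i - 3)" using that by (intro nth_append_left) simp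
      also have "\<dots> = Z i" using that by simp
      finally show ?thesis .
    qed
    moreover have ?thesis if "i = m+6 \<or> i = m+7 \<or> i = m+8"
    proof -
      have "L ! i = [x (m+6), x (m+7), x (m+8)] ! (i - (m+6))"
        using that unfolding Lx by (auto simp: nth_append)
      also have "\<dots> = x i" using that by auto
      also have "\<dots> = Z i" using that unfolding Z_def by auto
      finally show ?thesis .
    qed
    ultimately show ?thesis by blast
  qed
  have "tight_walk E L"
    unfolding tight_walk_def
  proof (intro conjI allI impI)
    show "4 \<le> length L" using lenL by simp
  next
    fix i assume i: "i + 4 \<le> length L"
    have eq: "L ! i = Z i" "L ! (i+1) = Z (i+1)" "L ! (i+2) = Z (i+2)" "L ! (i+3) = Z (i+3)"
      using LZ[of i] LZ[of "i+1"] LZ[of "i+2"] LZ[of "i+3"] i lenL by simp_all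
    show "{L ! i, L ! (i + 1), L ! (i + 2), L ! (i + 3)} \<in> E" using ZE[of i] i lenL eq by simp
    then show "distinct [L ! i, L ! (i + 1), L ! (i + 2), L ! (i + 3)]"
      by (rule card4_distinct[OF E4])
  qed
  moreover have "length ys = l - 3" using lm by (simp add: ys_def)
  moreover have "set ys \<subseteq> V" using ZAB assms(3,4) unfolding ys_def by fastforce
  ultimately show ?thesis unfolding L_def by blast
qed

end
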